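(* For all $a,b\in\mathbb{C}$ and integers $n\ge0$, $$\sum_{k=0}^n\binom{n}{k}a^kb^{n-k}H_k(2)=H_n(2)(a+b)^n+2\sum_{k=1}^n(a+b)^{n-k}b^k\,\frac{H_{k-1}-H_{n-k}}{k}.$$
   Context: $H_n=\sum_{k=1}^n\frac1k$ (with $H_0=0$) and $H_n^{(2)}=\sum_{k=1}^n\frac1{k^2}$. The multiple harmonic-like number $H_n(2)=\sum_{1\le k_1+k_2\le n}\frac{1}{k_1k_2}$ (over positive integers), which equals $H_n^2-H_n^{(2)}$. Convention $0^0=1$. *)

theory Defs
  imports "HOL-Analysis.Analysis"
begin

definition mharm2 :: "nat \<Rightarrow> complex" where
  "mharm2 n = (\<Sum>(k1, k2) \<in> {(k1, k2). 1 \<le> k1 \<and> 1 \<le> k2 \<and> k1 + k2 \<le> n}.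
                 1 / (of_nat k1 * of_nat k2))"

end

theory Submission
  imports Defs
begin

definition SS :: "complex \<Rightarrow> complex \<Rightarrow> nat \<Rightarrow> (nat \<Rightarrow> complex) \<Rightarrow> complex" where
  "SS a b n f = (\<Sum>k=0..n. of_nat (n choose k) * a ^ k * b ^ (n - k) * f k)"

lemma SS_Suc: "SS a b (Suc n) f = b * SS a b n f + a * SS a b n (\<lambda>k. f (Suc k))"
proof -
  have A: "SS a b (Suc n) f = b^Suc n * f 0 + (\<Sum>j=0..n. of_nat (Suc n choose Suc j) * a ^ Suc j * b ^ (n - j) * f (Suc j))"
    unfolding SS_def by (simp add: sum.atLeast0_atMost_Suc_shift del: sum.cl_ivl_Suc)
  have B: "(\<Sum>j=0..n. of_nat (Suc n choose Suc j) * a ^ Suc j * b ^ (n - j) * f (Suc j))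
     = (\<Sum>j=0..n. of_nat (n choose j) * a ^ Suc j * b ^ (n - j) * f (Suc j))
       + (\<Sum>j=0..n. of_nat (n choose Suc j) * a ^ Suc j * b ^ (n - j) * f (Suc j))"
    by (simp add: sum.distrib[symmetric] algebra_simps)
  have C: "(\<Sum>j=0..n. of_nat (n choose j) * a ^ Suc j * b ^ (n - j) * f (Suc j)) = a * SS a b n (\<lambda>k. f (Suc k))"
    unfolding SS_def by (simp add: sum_distrib_left algebra_simps)
  have D: "b * SS a b n f = (\<Sum>k=0..Suc n. of_nat (n choose k) * a ^ k * b ^ (Suc n - k) * f k)"
    unfolding SS_def by (simp add: sum_distrib_left algebra_simps Suc_diff_le)
  also have "\<dots> = b^Suc n * f 0 + (\<Sum>j=0..n. of_nat (n choose Suc j) * a ^ Suc j * b ^ (n - j) * f (Suc j))"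
    by (simp add: sum.atLeast0_atMost_Suc_shift del: sum.cl_ivl_Suc)
  finally show ?thesis using A B C by simp
qed

lemma SS_shift: "a * SS a b n (\<lambda>k. f (Suc k) / of_nat (Suc k))
   = (SS a b (Suc n) f - b^(Suc n) * f 0) / of_nat (Suc n)"
proof -
  have A: "SS a b (Suc n) f = b^Suc n * f 0 + (\<Sum>j=0..n. of_nat (Suc n choose Suc j) * a ^ Suc j * b ^ (n - j) * f (Suc j))"
    unfolding SS_def by (simp add: sum.atLeast0_atMost_Suc_shift del: sum.cl_ivl_Suc)
  have E: "of_nat (Suc n choose Suc j) = (of_nat (Suc n) * of_nat (n choose j) / of_nat (Suc j) :: complex)" for j
  proof -
    have "(of_nat (Suc n choose Suc j) :: complex) * of_nat (Suc j) = of_nat (Suc n) * of_nat (n choose j)"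
      using Suc_times_binomial_eq[of n j] by (metis of_nat_mult)
    then show ?thesis by (simp add: field_simps del: of_nat_Suc)
  qed
  have "(\<Sum>j=0..n. of_nat (Suc n choose Suc j) * a ^ Suc j * b ^ (n - j) * f (Suc j))
      = of_nat (Suc n) * (a * SS a b n (\<lambda>k. f (Suc k) / of_nat (Suc k)))"
    unfolding SS_def E by (simp add: sum_distrib_left algebra_simps del: of_nat_Suc)
  then show ?thesis using A by (simp add: field_simps del: of_nat_Suc)
qed

lemma SS_add: "SS a b n (\<lambda>k. f k + g k) = SS a b n f + SS a b n g"
  unfolding SS_def by (simp add: sum.distrib[symmetric] algebra_simps)
lemma SS_diff: "SS a b n (\<lambda>k. f k - g k) = SS a b n f - SS a b n g"
  unfolding SS_def by (simp add: sum_subtractf[symmetric] algebra_simps)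
lemma SS_mult: "SS a b n (\<lambda>k. x * f k) = x * SS a b n f"
  unfolding SS_def by (simp add: sum_distrib_left algebra_simps)
lemma SS_one: "SS a b n (\<lambda>k. 1) = (a + b) ^ n"
  unfolding SS_def binomial_ring by (simp add: atLeast0AtMost)

lemma SS_R: "a * SS a b n (\<lambda>k. 1 / of_nat (Suc k)) = ((a+b)^Suc n - b^Suc n) / of_nat (Suc n)"
  using SS_shift[of a b n "\<lambda>k. 1"] SS_one[of a b "Suc n"] by simp

lemma harm_Suc': "harm (Suc k) = harm k + 1 / (of_nat (Suc k) :: complex)"
  by (simp add: harm_Suc divide_inverse del: of_nat_Suc)

lemma sum_shift_pow: "(c::complex) * (\<Sum>k=1..n. c^(n-k) * g k) = (\<Sum>k=1..n. c^(Suc n-k) * g k)"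
  unfolding sum_distrib_left by (rule sum.cong) (auto simp: Suc_diff_le)

lemma SS_harm: "SS a b n harm = (a+b)^n * harm n - (\<Sum>k=1..n. (a+b)^(n-k) * (b^k / of_nat k))"
proof (induction n)
  case 0 then show ?case by (simp add: SS_def)
next
  case (Suc n)
  let ?c = "a+b"
  have "SS a b (Suc n) harm = b * SS a b n harm + a * SS a b n harm + a * SS a b n (\<lambda>k. 1 / of_nat (Suc k))"
    by (simp add: SS_Suc harm_Suc' SS_add algebra_simps del: of_nat_Suc)
  also have "\<dots> = ?c * SS a b n harm + (?c^Suc n - b^Suc n) / of_nat (Suc n)"
    by (simp add: SS_R algebra_simps del: of_nat_Suc)
  also have "\<dots> = ?c^Suc n * harm n - (\<Sum>k=1..n. ?c^(Suc n-k) * (b^k / of_nat k)) + (?c^Suc n - b^Suc n) / of_nat (Suc n)"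
    unfolding Suc.IH right_diff_distrib sum_shift_pow by simp
  also have "\<dots> = ?c^Suc n * harm (Suc n) - (\<Sum>k=1..Suc n. ?c^(Suc n-k) * (b^k / of_nat k))"
    by (simp add: harm_Suc' algebra_simps diff_divide_distrib add_divide_distrib del: of_nat_Suc)
  finally show ?case .
qed

lemma SS_inv: "SS a b n (\<lambda>j. 1 / of_nat j) = (\<Sum>k=1..n. ((a+b)^k - b^k) * b^(n-k) / of_nat k)"
proof (induction n)
  case 0 then show ?case by (simp add: SS_def)
next
  case (Suc n)
  have "SS a b (Suc n) (\<lambda>j. 1 / of_nat j) = b * SS a b n (\<lambda>j. 1 / of_nat j) + ((a+b)^Suc n - b^Suc n) / of_nat (Suc n)"
    by (simp add: SS_Suc SS_R del: of_nat_Suc)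
  also have "\<dots> = (\<Sum>k=1..Suc n. ((a+b)^k - b^k) * b^(Suc n-k) / of_nat k)"
    unfolding Suc.IH sum_distrib_left by (simp add: Suc_diff_le algebra_simps del: of_nat_Suc)
  finally show ?case .
qed

lemma SS_harm_pred: "SS a b n (\<lambda>j. harm (j - 1)) = SS a b n harm - SS a b n (\<lambda>j. 1 / of_nat j)"
proof -
  have "harm (j - 1) = harm j - 1 / (of_nat j :: complex)" for j
  proof (cases j)
    case 0 then show ?thesis by (simp add: harm_def)
  next
    case (Suc m) then show ?thesis by (simp add: harm_Suc' del: of_nat_Suc)
  qed
  then show ?thesis by (simp add: SS_diff)
qed

lemma mharm2_alt: "mharm2 n = (\<Sum>k1=1..n. \<Sum>k2=1..n-k1. 1 / (of_nat k1 * of_nat k2))"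
proof -
  have "{(k1, k2). 1 \<le> k1 \<and> 1 \<le> k2 \<and> k1 + k2 \<le> n} = Sigma {1..n} (\<lambda>k1. {1..n-k1})"
    by auto
  then show ?thesis unfolding mharm2_def by (simp add: sum.Sigma)
qed

lemma harm_rev: "(\<Sum>k=1..n. 1 / (of_nat (Suc n - k) :: complex)) = harm n"
proof -
  have "(\<Sum>k=1..n. 1 / (of_nat (Suc n - k) :: complex)) = (\<Sum>k=1..n. 1 / (of_nat (Suc n - (n + 1 - k)) :: complex))"
    by (rule sum.atLeastAtMost_rev)
  also have "\<dots> = (\<Sum>k=1..n. inverse (of_nat k))"
    by (rule sum.cong) (auto simp: divide_inverse)
  finally show ?thesis by (simp add: harm_def)
qed

lemma mharm2_Suc: "mharm2 (Suc n) = mharm2 n + 2 * harm n / of_nat (Suc n)"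
proof -
  have "mharm2 (Suc n) = (\<Sum>k1=1..n. \<Sum>k2=1..Suc n-k1. 1 / (of_nat k1 * of_nat k2))"
    unfolding mharm2_alt by simp
  also have "\<dots> = (\<Sum>k1=1..n. (\<Sum>k2=1..n-k1. 1 / (of_nat k1 * of_nat k2)) + 1 / (of_nat k1 * of_nat (Suc n - k1)))"
    by (rule sum.cong) (auto simp: Suc_diff_le simp del: of_nat_Suc)
  also have "\<dots> = mharm2 n + (\<Sum>k1=1..n. 1 / (of_nat k1 * of_nat (Suc n - k1)))"
    by (simp add: sum.distrib mharm2_alt del: of_nat_Suc)
  also have "(\<Sum>k1=1..n. 1 / (of_nat k1 * of_nat (Suc n - k1))) = (\<Sum>k1=1..n. (1 / of_nat k1 + 1 / of_nat (Suc n - k1)) / (of_nat (Suc n) :: complex))"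
  proof (rule sum.cong)
    fix k assume k: "k \<in> {1..n}"
    then have h1: "(of_nat k :: complex) \<noteq> 0" by auto
    have "Suc n - k \<noteq> 0" using k by auto
    then have h2: "(of_nat (Suc n - k) :: complex) \<noteq> 0" by (simp only: of_nat_eq_0_iff not_False_eq_True)
    have h3: "(of_nat (Suc n - k) :: complex) = of_nat (Suc n) - of_nat k" using k by (simp add: of_nat_diff)
    have h4: "1 + of_nat n \<noteq> (of_nat k :: complex)"
    proof
      assume "1 + of_nat n = (of_nat k :: complex)"
      then have "of_nat (Suc n) = (of_nat k :: complex)" by simp
      then have "Suc n = k" using of_nat_eq_iff by blast
      then show False using k by simp
    qed
    show "1 / (of_nat k * of_nat (Suc n - k)) = (1 / of_nat k + 1 / of_nat (Suc n - k)) / (of_nat (Suc n) :: complex)"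
      using h1 h2 h4 unfolding h3 by (simp add: field_simps del: of_nat_Suc)
  qed simp
  also have "\<dots> = (harm n + harm n) / of_nat (Suc n)"
  proof -
    have e1: "(\<Sum>k=1..n. 1 / (of_nat k :: complex)) = harm n" by (simp add: harm_def divide_inverse)
    show ?thesis unfolding sum_divide_distrib[symmetric] sum.distrib e1 harm_rev ..
  qed
  finally show ?thesis by simp
qed

definition TT :: "complex \<Rightarrow> complex \<Rightarrow> nat \<Rightarrow> complex" where
  "TT c b n = mharm2 n * c ^ n + 2 * (\<Sum>k=1..n. c ^ (n - k) * b ^ k * ((harm (k - 1) - harm (n - k)) / of_nat k))"

lemma TT_Suc:
  fixes c b :: complex and n :: nat
  defines "N \<equiv> Suc n"
  shows "TT c b N = c * TT c b n + 2 * ((c^N * harm N - (\<Sum>k=1..N. c^(N-k) * (b^k / of_nat k)))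
           - (\<Sum>k=1..N. (c^k - b^k) * b^(N-k) / of_nat k)) / of_nat N"
proof -
  define A where "A = (\<Sum>k=1..n. c^(N-k) * b^k / of_nat k)"
  define B where "B = (\<Sum>k=1..n. c^k * b^(N-k) / of_nat k)"
  define P where "P = (\<Sum>k=1..n. c ^ (n - k) * b ^ k * ((harm (k - 1) - harm (n - k)) / of_nat k))"
  define Q where "Q = (\<Sum>k=1..n. c^(N-k) * b^k / (of_nat k * of_nat (N - k)))"
  have Nz: "(of_nat N :: complex) \<noteq> 0" unfolding N_def by (simp del: of_nat_Suc)
  have HN: "harm N = harm n + 1 / (of_nat N :: complex)" unfolding N_def by (simp add: harm_Suc' del: of_nat_Suc)
  have L1: "(\<Sum>k=1..N. c ^ (N - k) * b ^ k * ((harm (k - 1) - harm (N - k)) / of_nat k))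
     = c * P - Q + b^N * harm n / of_nat N"
  proof -
    have "(\<Sum>k=1..N. c ^ (N - k) * b ^ k * ((harm (k - 1) - harm (N - k)) / of_nat k))
       = (\<Sum>k=1..n. c ^ (N - k) * b ^ k * ((harm (k - 1) - harm (N - k)) / of_nat k)) + b^N * harm n / of_nat N"
      unfolding N_def by (simp add: harm_def del: of_nat_Suc)
    also have "(\<Sum>k=1..n. c ^ (N - k) * b ^ k * ((harm (k - 1) - harm (N - k)) / of_nat k))
       = (\<Sum>k=1..n. c * (c ^ (n - k) * b ^ k * ((harm (k - 1) - harm (n - k)) / of_nat k)) - c^(N-k) * b^k / (of_nat k * of_nat (N - k)))"
    proof (rule sum.cong)
      fix k assume k: "k \<in> {1..n}"
      then have e1: "N - k = Suc (n - k)" "c ^ (N - k) = c * c^(n-k)" unfolding N_def by (auto simp: Suc_diff_le)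
      have e2: "harm (N - k) = harm (n - k) + 1 / (of_nat (N - k) :: complex)"
        unfolding e1(1) by (simp add: harm_Suc' del: of_nat_Suc)
      have h1: "(of_nat k :: complex) \<noteq> 0" using k by auto
      have "N - k \<noteq> 0" using k unfolding N_def by auto
      then have h2: "(of_nat (N - k) :: complex) \<noteq> 0" by (simp only: of_nat_eq_0_iff not_False_eq_True)
      show "c ^ (N - k) * b ^ k * ((harm (k - 1) - harm (N - k)) / of_nat k)
         = c * (c ^ (n - k) * b ^ k * ((harm (k - 1) - harm (n - k)) / of_nat k)) - c^(N-k) * b^k / (of_nat k * of_nat (N - k))"
        unfolding e2 unfolding e1(2) using h1 h2 by (simp add: field_simps)
    qed simp
    also have "\<dots> = c * P - Q"
      unfolding P_def Q_def by (simp add: sum_subtractf sum_distrib_left)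
    finally show ?thesis .
  qed
  have L2: "Q * of_nat N = A + B"
  proof -
    have "Q * of_nat N = (\<Sum>k=1..n. c^(N-k) * b^k / of_nat k + c^(N-k) * b^k / of_nat (N - k))"
      unfolding Q_def sum_distrib_right
    proof (rule sum.cong)
      fix k assume k: "k \<in> {1..n}"
      then have h1: "(of_nat k :: complex) \<noteq> 0" by auto
      have "N - k \<noteq> 0" using k unfolding N_def by auto
      then have h2: "(of_nat (N - k) :: complex) \<noteq> 0" by (simp only: of_nat_eq_0_iff not_False_eq_True)
      have h3: "(of_nat (N - k) :: complex) = of_nat N - of_nat k" using k unfolding N_def by (simp add: of_nat_diff)
      have h4: "(of_nat N :: complex) - of_nat k \<noteq> 0" using h2 h3 by simp
      show "c^(N-k) * b^k / (of_nat k * of_nat (N - k)) * of_nat N = c^(N-k) * b^k / of_nat k + c^(N-k) * b^k / of_nat (N - k)"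
        unfolding h3 using h1 h4 by (simp add: field_simps)
    qed simp
    also have "\<dots> = A + (\<Sum>k=1..n. c^(N-k) * b^k / of_nat (N - k))"
      unfolding A_def by (simp add: sum.distrib)
    also have "(\<Sum>k=1..n. c^(N-k) * b^k / of_nat (N - k)) = (\<Sum>k=1..n. c^(N-(n+1-k)) * b^(n+1-k) / of_nat (N - (n+1-k)))"
      by (rule sum.atLeastAtMost_rev)
    also have "\<dots> = B" unfolding B_def
      by (rule sum.cong) (auto simp: N_def Suc_diff_le)
    finally show ?thesis .
  qed
  have L3: "(\<Sum>k=1..N. c^(N-k) * (b^k / of_nat k)) = A + b^N / of_nat N"
    unfolding A_def N_def by (simp del: of_nat_Suc)
  have L4: "(\<Sum>k=1..N. (c^k - b^k) * b^(N-k) / of_nat k) = B + c^N / of_nat N - b^N * harm N"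
  proof -
    have "(\<Sum>k=1..N. (c^k - b^k) * b^(N-k) / of_nat k) = (\<Sum>k=1..N. c^k * b^(N-k) / of_nat k - b^N * inverse (of_nat k))"
    proof (rule sum.cong)
      fix k assume "k \<in> {1..N}"
      then have "b^k * b^(N-k) = b^N" by (simp add: power_add[symmetric])
      then show "(c^k - b^k) * b^(N-k) / of_nat k = c^k * b^(N-k) / of_nat k - b^N * inverse (of_nat k)"
        by (simp add: algebra_simps diff_divide_distrib divide_inverse)
    qed simp
    also have "\<dots> = (\<Sum>k=1..N. c^k * b^(N-k) / of_nat k) - b^N * harm N"
      by (simp add: sum_subtractf sum_distrib_left harm_def)
    also have "(\<Sum>k=1..N. c^k * b^(N-k) / of_nat k) = B + c^N / of_nat N"
      unfolding B_def N_def by (simp del: of_nat_Suc)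
    finally show ?thesis .
  qed
  have TN: "TT c b N = mharm2 N * c ^ N + 2 * (c * P - Q + b^N * harm n / of_nat N)"
    unfolding TT_def L1 ..
  have Tn: "TT c b n = mharm2 n * c ^ n + 2 * P" unfolding TT_def P_def ..
  have hN: "mharm2 N = mharm2 n + 2 * harm n / of_nat N" unfolding N_def by (rule mharm2_Suc)
  have cN: "c^N = c * c^n" unfolding N_def by simp
  have Qe: "Q = (A + B) / of_nat N" using L2 Nz by (simp add: field_simps)
  show ?thesis unfolding TN Tn L3 L4 hN Qe HN cN using Nz
    by (simp add: field_simps)
qed

lemma SS_mharm2: "SS a b n mharm2 = TT (a+b) b n"
proof (induction n)
  case 0 then show ?case by (simp add: SS_def TT_def)
next
  case (Suc n)
  define f :: "nat \<Rightarrow> complex" where "f j = 2 * harm (j - 1)" for j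
  have f0: "f 0 = 0" unfolding f_def by (simp add: harm_def)
  have fS: "(\<lambda>k. 2 * harm k / of_nat (Suc k)) = (\<lambda>k. f (Suc k) / (of_nat (Suc k) :: complex))"
    unfolding f_def by simp
  have "SS a b (Suc n) mharm2 = b * SS a b n mharm2 + a * SS a b n mharm2 + a * SS a b n (\<lambda>k. 2 * harm k / of_nat (Suc k))"
    by (simp add: SS_Suc mharm2_Suc SS_add algebra_simps del: of_nat_Suc)
  also have "a * SS a b n (\<lambda>k. 2 * harm k / of_nat (Suc k)) = SS a b (Suc n) f / of_nat (Suc n)"
    unfolding fS SS_shift f0 by simp
  also have "SS a b (Suc n) f = 2 * (SS a b (Suc n) harm - SS a b (Suc n) (\<lambda>j. 1 / of_nat j))"
    unfolding f_def SS_mult SS_harm_pred ..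
  finally have "SS a b (Suc n) mharm2 = (a+b) * TT (a+b) b n + 2 * (SS a b (Suc n) harm - SS a b (Suc n) (\<lambda>j. 1 / of_nat j)) / of_nat (Suc n)"
    using Suc.IH by (simp add: algebra_simps)
  then show ?case unfolding TT_Suc SS_harm SS_inv by simp
qed

theorem corollary4:
  fixes a b :: complex and n :: nat
  shows "(\<Sum>k=0..n. of_nat (n choose k) * a ^ k * b ^ (n - k) * mharm2 k)
         = mharm2 n * (a + b) ^ n
           + 2 * (\<Sum>k=1..n. (a + b) ^ (n - k) * b ^ k * ((harm (k - 1) - harm (n - k)) / of_nat k))"
  using SS_mharm2[of a b n] unfolding SS_def TT_def .

end
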